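(* Let $(T,\eta,(-)^\#,\sqsubseteq,\Uparrow)$ be a while-monad on $\mathbf{Set}$, $(\Omega,\le)$ a complete lattice and $o:T\Omega\to\Omega$ a meet-preserving Eilenberg–Moore $T$-algebra with $o(\bigsqcup_i c_i)=\bigwedge_i o(c_i)$ for every $\omega$-chain $(c_i)$ in $(T\Omega,\sqsubseteq_\Omega)$ and $o(\Uparrow_\Omega)=\top$. Let $(A,\le_A)$ be a complete lattice (with binary meets $\wedge_A$, joins $\vee_A$) and $\alpha:\mathcal P_\Omega(\mathbb M)\to A$, $\gamma:A\to\mathcal P_\Omega(\mathbb M)$ a Galois connection $\alpha\dashv\gamma$. Define $\llbracket-\rrbracket^\sharp$ on while programs by induction: $\llbracket\mathtt{skip}\rrbracket^\sharp=\mathrm{id}_A$, $\llbracket P;P'\rrbracket^\sharp=\llbracket P'\rrbracket^\sharp\circ\llbracket P\rrbracket^\sharp$, $\llbracket x:=e\rrbracket^\sharp=\alpha\circ sp^o(\llbracket x:=e\rrbracket)\circ\gamma$, $\llbracket\mathtt{if}\ b\ \{P_1\}\ \mathtt{else}\ \{P_2\}\rrbracket^\sharp=\lambda\phi.\ \llbracket P_1\rrbracket^\sharp(\phi\wedge_A\alpha(\mathrm{grd}_b^{\mathrm{tt}}))\vee_A\llbracket P_2\rrbracket^\sharp(\phi\wedge_A\alpha(\mathrm{grd}_b^{\mathrm{ff}}))$, and $\llbracket\mathtt{while}\ b\ \{P\}\rrbracket^\sharp=\mu\Theta$, the least fixpoint in the complete lattice of monotone maps $A\to A$ (pointwise order)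 of $\Theta(f)=\lambda\phi.\ f(\llbracket P\rrbracket^\sharp(\phi\wedge_A\alpha(\mathrm{grd}_b^{\mathrm{tt}})))\vee_A(\phi\wedge_A\alpha(\mathrm{grd}_b^{\mathrm{ff}}))$. Then $\llbracket-\rrbracket^\sharp$ is a functor $L_w\to\mathbf{Pos}$ (sending the unique object to $A$), and for every program $P$, $\alpha\circ\llbracket P\rrbracket^c\circ\gamma\le\llbracket P\rrbracket^\sharp$ pointwise.
   Context: Fix a set of values $\mathbb V$, a finite set of variables $X$, and memories $\mathbb M=\mathbb V^X$. Programs: $P::=\mathtt{skip}\mid P;P\mid x:=e\mid \mathtt{if}\ b\ \{P\}\ \mathtt{else}\ \{P\}\mid \mathtt{while}\ b\ \{P\}$; $L_w$ is the one-object category whose morphisms are programs, with composition given by sequencing $;$ (taken associative) and identity $\mathtt{skip}$ (with $\mathtt{skip};P=P;\mathtt{skip}=P$). Each condition $b$ has a given interpretation $\llbracket b\rrbracket:\mathbb M\to\{\mathrm{ff},\mathrm{tt}\}$. A while-monad on $\mathbf{Set}$ is a monad $(T,\eta,(-)^\#)$ on $\mathbf{Set}$ together with an $\omega$-cpo structure $(\sqsubseteq_X,\Uparrow_X)$ (least element $\Uparrow_X$, sups $\bigsqcup$ of $\omega$-chains) on each $TX$, such that, with $\sqsubseteq_{X,Y}$ the pointwise order on Kleisli maps $\mathbf{Set}_T(X,Y)=\mathbf{Set}(X,TY)$ and $\Uparrow_{X,Y}=\lambda x.\Uparrow_Y$: Kleisli composition $g\bullet f=g^\#\circ f$ is monotone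 and $\omega$-continuous in each argument, and $f\bullet\Uparrow_{X,Y}=\Uparrow_{X,Z}$. Monadic semantics: each assignment has a given $\llbracket x:=e\rrbracket\in\mathbf{Set}_T(\mathbb M,\mathbb M)$, and $\llbracket\mathtt{skip}\rrbracket_T=\eta_{\mathbb M}$, $\llbracket P;P'\rrbracket_T=\llbracket P'\rrbracket_T\bullet\llbracket P\rrbracket_T$, $\llbracket x:=e\rrbracket_T=\llbracket x:=e\rrbracket$, $\llbracket\mathtt{if}\ b\ \{P_1\}\ \mathtt{else}\ \{P_2\}\rrbracket_T=\lambda\rho.$ if $\llbracket b\rrbracket\rho=\mathrm{tt}$ then $\llbracket P_1\rrbracket_T(\rho)$ else $\llbracket P_2\rrbracket_T(\rho)$, $\llbracket\mathtt{while}\ b\ \{P\}\rrbracket_T=\mu\Phi$ (least fixpoint w.r.t. $\sqsubseteq_{\mathbb M,\mathbb M}$) with $\Phi(f)=\lambda\rho.$ if $\llbracket b\rrbracket\rho=\mathrm{tt}$ then $(f\bullet\llbracket P\rrbracket_T)(\rho)$ else $\eta_{\mathbb M}(\rho)$. $\mathcal P_\Omega(Y)=(\mathbf{Set}(Y,\Omega),\le_Y)$ with pointwise order. An Eilenberg–Moore algebra $o$ is meet-preserving if each $\phi\mapsto o\circ T\phi:\mathcal P_\Omega(Y)\to\mathcal P_\Omega(TY)$ preserves arbitrary meets. For $f\in\mathbf{Set}_T(Y,Z)$, $wp^o(f)(\phi)=o\circ T\phi\circ f$ and $sp^o(f)$ is the left adjoint of $wp^o(f)$. The collecting semantics is $\llbracket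 P\rrbracket^c=sp^o(\llbracket P\rrbracket_T):\mathcal P_\Omega(\mathbb M)\to\mathcal P_\Omega(\mathbb M)$. $\mathrm{grd}_b^v\in\mathcal P_\Omega(\mathbb M)$: $\mathrm{grd}_b^v(\rho)=\top$ if $\llbracket b\rrbracket\rho=v$, else $\bot$. A Galois connection $\alpha\dashv\gamma$ means $\alpha(\phi)\le_A a\iff\phi\le\gamma(a)$. *)

theory Defs
  imports Main
begin

datatype ('x, 'e, 'b) prog =
    Skip
  | Seq "('x, 'e, 'b) prog" "('x, 'e, 'b) prog"
  | Assign 'x 'e
  | If 'b "('x, 'e, 'b) prog" "('x, 'e, 'b) prog"
  | While 'b "('x, 'e, 'b) prog"

text \<open>Morphisms of L_w: programs modulo associativity of sequencing and the
  unit laws of skip (congruence closure).\<close>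
inductive prog_eq :: "('x, 'e, 'b) prog \<Rightarrow> ('x, 'e, 'b) prog \<Rightarrow> bool" where
  pe_refl: "prog_eq P P"
| pe_sym: "prog_eq P Q \<Longrightarrow> prog_eq Q P"
| pe_trans: "prog_eq P Q \<Longrightarrow> prog_eq Q R \<Longrightarrow> prog_eq P R"
| pe_assoc: "prog_eq (Seq (Seq P Q) R) (Seq P (Seq Q R))"
| pe_skipL: "prog_eq (Seq Skip P) P"
| pe_skipR: "prog_eq (Seq P Skip) P"
| pe_seq: "prog_eq P P' \<Longrightarrow> prog_eq Q Q' \<Longrightarrow> prog_eq (Seq P Q) (Seq P' Q')"
| pe_if: "prog_eq P P' \<Longrightarrow> prog_eq Q Q' \<Longrightarrow> prog_eq (If b P Q) (If b P' Q')"
| pe_while: "prog_eq P P' \<Longrightarrow> prog_eq (While b P) (While b P')"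

definition omega_chain :: "('t \<Rightarrow> 't \<Rightarrow> bool) \<Rightarrow> (nat \<Rightarrow> 't) \<Rightarrow> bool" where
  "omega_chain le c \<longleftrightarrow> (\<forall>i. le (c i) (c (Suc i)))"

definition is_lub :: "('t \<Rightarrow> 't \<Rightarrow> bool) \<Rightarrow> (nat \<Rightarrow> 't) \<Rightarrow> 't \<Rightarrow> bool" where
  "is_lub le c s \<longleftrightarrow> (\<forall>i. le (c i) s) \<and> (\<forall>u. (\<forall>i. le (c i) u) \<longrightarrow> le s u)"

definition omega_cpo :: "('t \<Rightarrow> 't \<Rightarrow> bool) \<Rightarrow> 't \<Rightarrow> bool" where
  "omega_cpo le bt \<longleftrightarrow>
     (\<forall>x. le x x) \<and> (\<forall>x y z. le x y \<longrightarrow> le y z \<longrightarrow> le x z) \<and>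
     (\<forall>x y. le x y \<longrightarrow> le y x \<longrightarrow> x = y) \<and> (\<forall>x. le bt x) \<and>
     (\<forall>c. omega_chain le c \<longrightarrow> (\<exists>s. is_lub le c s))"

definition fun_le :: "('t \<Rightarrow> 't \<Rightarrow> bool) \<Rightarrow> ('x \<Rightarrow> 't) \<Rightarrow> ('x \<Rightarrow> 't) \<Rightarrow> bool" where
  "fun_le le f g \<longleftrightarrow> (\<forall>x. le (f x) (g x))"

text \<open>Kleisli composition g \<bullet> f = g^# \<circ> f, the bind being the Kleisli extension.\<close>
definition kleisli :: "(('y \<Rightarrow> 'tz) \<Rightarrow> 'ty \<Rightarrow> 'tz) \<Rightarrow> ('y \<Rightarrow> 'tz) \<Rightarrow> ('x \<Rightarrow> 'ty) \<Rightarrow> 'x \<Rightarrow> 'tz" where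
  "kleisli ext g f = ext g \<circ> f"

section \<open>While-monads (restricted to the objects M and Omega)\<close>

definition unit_left :: "('y \<Rightarrow> 'ty) \<Rightarrow> (('y \<Rightarrow> 'tz) \<Rightarrow> 'ty \<Rightarrow> 'tz) \<Rightarrow> bool" where
  "unit_left eta ext \<longleftrightarrow> (\<forall>f y. ext f (eta y) = f y)"

definition unit_right :: "('y \<Rightarrow> 'ty) \<Rightarrow> (('y \<Rightarrow> 'ty) \<Rightarrow> 'ty \<Rightarrow> 'ty) \<Rightarrow> bool" where
  "unit_right eta ext \<longleftrightarrow> (\<forall>t. ext eta t = t)"

definition ext_assoc :: "(('y \<Rightarrow> 'tz) \<Rightarrow> 'ty \<Rightarrow> 'tz) \<Rightarrow> (('z \<Rightarrow> 'tw) \<Rightarrow> 'tz \<Rightarrow> 'tw)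
    \<Rightarrow> (('y \<Rightarrow> 'tw) \<Rightarrow> 'ty \<Rightarrow> 'tw) \<Rightarrow> bool" where
  "ext_assoc eYZ eZW eYW \<longleftrightarrow> (\<forall>g h t. eZW h (eYZ g t) = eYW (\<lambda>y. eZW h (g y)) t)"

text \<open>Conditions on Kleisli composition Set_T(X,Y) x Set_T(Y,Z) -> Set_T(X,Z),
  for a source object X given by the phantom type argument.\<close>
definition kleisli_conds :: "'x itself \<Rightarrow> ('ty \<Rightarrow> 'ty \<Rightarrow> bool) \<Rightarrow> 'ty \<Rightarrow>
    ('tz \<Rightarrow> 'tz \<Rightarrow> bool) \<Rightarrow> 'tz \<Rightarrow> (('y \<Rightarrow> 'tz) \<Rightarrow> 'ty \<Rightarrow> 'tz) \<Rightarrow> bool" where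
  "kleisli_conds _ leY botY leZ botZ ext \<longleftrightarrow>
     (\<forall>(f :: 'x \<Rightarrow> 'ty) f' g. fun_le leY f f' \<longrightarrow>
        fun_le leZ (kleisli ext g f) (kleisli ext g f')) \<and>
     (\<forall>(f :: 'x \<Rightarrow> 'ty) g g'. fun_le leZ g g' \<longrightarrow>
        fun_le leZ (kleisli ext g f) (kleisli ext g' f)) \<and>
     (\<forall>(fs :: nat \<Rightarrow> 'x \<Rightarrow> 'ty) F g. omega_chain (fun_le leY) fs \<longrightarrow> is_lub (fun_le leY) fs F \<longrightarrow>
        is_lub (fun_le leZ) (\<lambda>i. kleisli ext g (fs i)) (kleisli ext g F)) \<and>
     (\<forall>(f :: 'x \<Rightarrow> 'ty) gs G. omega_chain (fun_le leZ) gs \<longrightarrow> is_lub (fun_le leZ) gs G \<longrightarrow>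
        is_lub (fun_le leZ) (\<lambda>i. kleisli ext (gs i) f) (kleisli ext G f)) \<and>
     (\<forall>g. kleisli ext g (\<lambda>_ :: 'x. botY) = (\<lambda>_. botZ))"

text \<open>A while-monad, given on the objects 'm (memories) and 'o (Omega):
  units, Kleisli extensions between these objects, omega-cpo structures on T 'm and T 'o.\<close>
definition while_monad ::
  "('m \<Rightarrow> 'tm) \<Rightarrow> ('o \<Rightarrow> 'to) \<Rightarrow>
   (('m \<Rightarrow> 'tm) \<Rightarrow> 'tm \<Rightarrow> 'tm) \<Rightarrow> (('m \<Rightarrow> 'to) \<Rightarrow> 'tm \<Rightarrow> 'to) \<Rightarrow>
   (('o \<Rightarrow> 'tm) \<Rightarrow> 'to \<Rightarrow> 'tm) \<Rightarrow> (('o \<Rightarrow> 'to) \<Rightarrow> 'to \<Rightarrow> 'to) \<Rightarrow>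
   ('tm \<Rightarrow> 'tm \<Rightarrow> bool) \<Rightarrow> 'tm \<Rightarrow> ('to \<Rightarrow> 'to \<Rightarrow> bool) \<Rightarrow> 'to \<Rightarrow> bool" where
  "while_monad etaM etaO eMM eMO eOM eOO leM botM leO botO \<longleftrightarrow>
     unit_left etaM eMM \<and> unit_left etaM eMO \<and> unit_left etaO eOM \<and> unit_left etaO eOO \<and>
     unit_right etaM eMM \<and> unit_right etaO eOO \<and>
     ext_assoc eMM eMM eMM \<and> ext_assoc eMM eMO eMO \<and> ext_assoc eMO eOM eMM \<and> ext_assoc eMO eOO eMO \<and>
     ext_assoc eOM eMM eOM \<and> ext_assoc eOM eMO eOO \<and> ext_assoc eOO eOM eOM \<and> ext_assoc eOO eOO eOO \<and>
     omega_cpo leM botM \<and> omega_cpo leO botO \<and>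
     kleisli_conds TYPE('m) leM botM leM botM eMM \<and> kleisli_conds TYPE('m) leM botM leO botO eMO \<and>
     kleisli_conds TYPE('m) leO botO leM botM eOM \<and> kleisli_conds TYPE('m) leO botO leO botO eOO \<and>
     kleisli_conds TYPE('o) leM botM leM botM eMM \<and> kleisli_conds TYPE('o) leM botM leO botO eMO \<and>
     kleisli_conds TYPE('o) leO botO leM botM eOM \<and> kleisli_conds TYPE('o) leO botO leO botO eOO"

definition Tmap :: "(('y \<Rightarrow> 'tz) \<Rightarrow> 'ty \<Rightarrow> 'tz) \<Rightarrow> ('z \<Rightarrow> 'tz) \<Rightarrow> ('y \<Rightarrow> 'z) \<Rightarrow> 'ty \<Rightarrow> 'tz" where
  "Tmap ext eta phi = ext (eta \<circ> phi)"

text \<open>Eilenberg--Moore algebra law o \<circ> mu = o \<circ> T o, in Kleisli form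
  o \<circ> h^# = o \<circ> T(o \<circ> h), for h with source M and Omega.\<close>
definition em_algebra :: "('o \<Rightarrow> 'to) \<Rightarrow> (('m \<Rightarrow> 'to) \<Rightarrow> 'tm \<Rightarrow> 'to) \<Rightarrow>
    (('o \<Rightarrow> 'to) \<Rightarrow> 'to \<Rightarrow> 'to) \<Rightarrow> ('to \<Rightarrow> 'o) \<Rightarrow> bool" where
  "em_algebra etaO eMO eOO alg \<longleftrightarrow>
     (\<forall>w. alg (etaO w) = w) \<and>
     (\<forall>h t. alg (eMO h t) = alg (Tmap eMO etaO (alg \<circ> h) t)) \<and>
     (\<forall>h t. alg (eOO h t) = alg (Tmap eOO etaO (alg \<circ> h) t))"

definition meet_preserving :: "('o::complete_lattice \<Rightarrow> 'to) \<Rightarrow> (('m \<Rightarrow> 'to) \<Rightarrow> 'tm \<Rightarrow> 'to) \<Rightarrow>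
    (('o \<Rightarrow> 'to) \<Rightarrow> 'to \<Rightarrow> 'to) \<Rightarrow> ('to \<Rightarrow> 'o) \<Rightarrow> bool" where
  "meet_preserving etaO eMO eOO alg \<longleftrightarrow>
     (\<forall>S :: ('m \<Rightarrow> 'o) set. alg \<circ> Tmap eMO etaO (Inf S) = Inf ((\<lambda>phi. alg \<circ> Tmap eMO etaO phi) ` S)) \<and>
     (\<forall>S :: ('o \<Rightarrow> 'o) set. alg \<circ> Tmap eOO etaO (Inf S) = Inf ((\<lambda>phi. alg \<circ> Tmap eOO etaO phi) ` S))"

definition wp :: "('o \<Rightarrow> 'to) \<Rightarrow> (('m \<Rightarrow> 'to) \<Rightarrow> 'tm \<Rightarrow> 'to) \<Rightarrow> ('to \<Rightarrow> 'o) \<Rightarrow>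
    ('m \<Rightarrow> 'tm) \<Rightarrow> ('m \<Rightarrow> 'o) \<Rightarrow> 'm \<Rightarrow> 'o" where
  "wp etaO eMO alg f phi = alg \<circ> Tmap eMO etaO phi \<circ> f"

definition sp :: "('o::order \<Rightarrow> 'to) \<Rightarrow> (('m \<Rightarrow> 'to) \<Rightarrow> 'tm \<Rightarrow> 'to) \<Rightarrow> ('to \<Rightarrow> 'o) \<Rightarrow>
    ('m \<Rightarrow> 'tm) \<Rightarrow> ('m \<Rightarrow> 'o) \<Rightarrow> 'm \<Rightarrow> 'o" where
  "sp etaO eMO alg f = (THE g. \<forall>psi phi. g psi \<le> phi \<longleftrightarrow> psi \<le> wp etaO eMO alg f phi)"

definition least_fix :: "('t \<Rightarrow> 't \<Rightarrow> bool) \<Rightarrow> ('t \<Rightarrow> 't) \<Rightarrow> 't" where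
  "least_fix le F = (THE f. F f = f \<and> (\<forall>g. F g = g \<longrightarrow> le f g))"

primrec semT :: "('m \<Rightarrow> 'tm) \<Rightarrow> (('m \<Rightarrow> 'tm) \<Rightarrow> 'tm \<Rightarrow> 'tm) \<Rightarrow> ('tm \<Rightarrow> 'tm \<Rightarrow> bool) \<Rightarrow>
    ('x \<Rightarrow> 'e \<Rightarrow> 'm \<Rightarrow> 'tm) \<Rightarrow> ('b \<Rightarrow> 'm \<Rightarrow> bool) \<Rightarrow> ('x, 'e, 'b) prog \<Rightarrow> 'm \<Rightarrow> 'tm" where
  "semT etaM eMM leM asgn cond Skip = etaM"
| "semT etaM eMM leM asgn cond (Seq P Q) =
     kleisli eMM (semT etaM eMM leM asgn cond Q) (semT etaM eMM leM asgn cond P)"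
| "semT etaM eMM leM asgn cond (Assign x e) = asgn x e"
| "semT etaM eMM leM asgn cond (If b P Q) =
     (\<lambda>\<rho>. if cond b \<rho> then semT etaM eMM leM asgn cond P \<rho> else semT etaM eMM leM asgn cond Q \<rho>)"
| "semT etaM eMM leM asgn cond (While b P) =
     least_fix (fun_le leM)
       (\<lambda>f \<rho>. if cond b \<rho> then kleisli eMM f (semT etaM eMM leM asgn cond P) \<rho> else etaM \<rho>)"

definition semC where
  "semC etaM eMM leM asgn cond etaO eMO alg P = sp etaO eMO alg (semT etaM eMM leM asgn cond P)"

definition grd :: "('b \<Rightarrow> 'm \<Rightarrow> bool) \<Rightarrow> 'b \<Rightarrow> bool \<Rightarrow> 'm \<Rightarrow> 'o::complete_lattice" where
  "grd cond b v = (\<lambda>\<rho>. if cond b \<rho> = v then top else bot)"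

definition lfp_mono :: "(('a::complete_lattice \<Rightarrow> 'a) \<Rightarrow> ('a \<Rightarrow> 'a)) \<Rightarrow> 'a \<Rightarrow> 'a" where
  "lfp_mono Th = Inf {f. mono f \<and> Th f \<le> f}"

primrec semA :: "('o::complete_lattice \<Rightarrow> 'to) \<Rightarrow> (('m \<Rightarrow> 'to) \<Rightarrow> 'tm \<Rightarrow> 'to) \<Rightarrow> ('to \<Rightarrow> 'o) \<Rightarrow>
    (('m \<Rightarrow> 'o) \<Rightarrow> 'a::complete_lattice) \<Rightarrow> ('a \<Rightarrow> 'm \<Rightarrow> 'o) \<Rightarrow>
    ('x \<Rightarrow> 'e \<Rightarrow> 'm \<Rightarrow> 'tm) \<Rightarrow> ('b \<Rightarrow> 'm \<Rightarrow> bool) \<Rightarrow> ('x, 'e, 'b) prog \<Rightarrow> 'a \<Rightarrow> 'a" where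
  "semA etaO eMO alg \<alpha> \<gamma> asgn cond Skip = id"
| "semA etaO eMO alg \<alpha> \<gamma> asgn cond (Seq P Q) =
     semA etaO eMO alg \<alpha> \<gamma> asgn cond Q \<circ> semA etaO eMO alg \<alpha> \<gamma> asgn cond P"
| "semA etaO eMO alg \<alpha> \<gamma> asgn cond (Assign x e) = \<alpha> \<circ> sp etaO eMO alg (asgn x e) \<circ> \<gamma>"
| "semA etaO eMO alg \<alpha> \<gamma> asgn cond (If b P Q) =
     (\<lambda>\<phi>. sup (semA etaO eMO alg \<alpha> \<gamma> asgn cond P (inf \<phi> (\<alpha> (grd cond b True))))
              (semA etaO eMO alg \<alpha> \<gamma> asgn cond Q (inf \<phi> (\<alpha> (grd cond b False)))))"
| "semA etaO eMO alg \<alpha> \<gamma> asgn cond (While b P) =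
     lfp_mono (\<lambda>f \<phi>. sup (f (semA etaO eMO alg \<alpha> \<gamma> asgn cond P (inf \<phi> (\<alpha> (grd cond b True)))))
                         (inf \<phi> (\<alpha> (grd cond b False))))"

end

theory Submission
  imports Defs
begin


lemma lub_unique:
  assumes "\<forall>x y. le x y \<longrightarrow> le y x \<longrightarrow> x = y" "is_lub le c s" "is_lub le c t"
  shows "s = t"
  using assms unfolding is_lub_def by blast

lemma fun_lub_pointwise:
  assumes "is_lub (fun_le le) fs F"
  shows "is_lub le (\<lambda>i. fs i x) (F x)"
  unfolding is_lub_def
proof (intro conjI allI impI)
  fix i show "le (fs i x) (F x)" using assms unfolding is_lub_def fun_le_def by blast
next
  fix u assume u: "\<forall>i. le (fs i x) u"
  have "\<forall>i. fun_le le (fs i) (F(x := u))"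
    using assms u unfolding is_lub_def fun_le_def by auto
  hence "fun_le le F (F(x:=u))" using assms unfolding is_lub_def by blast
  thus "le (F x) u" unfolding fun_le_def by (metis fun_upd_same)
qed

lemma pointwise_fun_lub:
  assumes "\<And>x. is_lub le (\<lambda>i. fs i x) (F x)"
  shows "is_lub (fun_le le) fs F"
  using assms unfolding is_lub_def fun_le_def by blast

lemma lfp_mono_pre:
  assumes "\<And>f g. f \<le> g \<Longrightarrow> Th f \<le> Th g"
  shows "Th (lfp_mono Th) \<le> lfp_mono Th"
  unfolding lfp_mono_def
proof (rule Inf_greatest)
  fix f assume "f \<in> {f. mono f \<and> Th f \<le> f}"
  hence "Inf {f. mono f \<and> Th f \<le> f} \<le> f" "Th f \<le> f" by (auto intro: Inf_lower)
  thus "Th (Inf {f. mono f \<and> Th f \<le> f}) \<le> f" using assms order_trans by blast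
qed

lemma mono_lfp_mono: "mono (lfp_mono Th)"
  unfolding lfp_mono_def
  by (rule monoI) (auto simp: Inf_apply intro!: INF_mono dest: monoD)

locale L =
  fixes etaM :: "'m \<Rightarrow> 'tm" and etaO :: "'o::complete_lattice \<Rightarrow> 'to"
    and eMM :: "('m \<Rightarrow> 'tm) \<Rightarrow> 'tm \<Rightarrow> 'tm"
    and eMO :: "('m \<Rightarrow> 'to) \<Rightarrow> 'tm \<Rightarrow> 'to"
    and eOM :: "('o \<Rightarrow> 'tm) \<Rightarrow> 'to \<Rightarrow> 'tm"
    and eOO :: "('o \<Rightarrow> 'to) \<Rightarrow> 'to \<Rightarrow> 'to"
    and leM :: "'tm \<Rightarrow> 'tm \<Rightarrow> bool" and botM :: 'tm
    and leO :: "'to \<Rightarrow> 'to \<Rightarrow> bool" and botO :: 'to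
    and alg :: "'to \<Rightarrow> 'o"
    and \<alpha> :: "('m \<Rightarrow> 'o) \<Rightarrow> 'a::complete_lattice"
    and \<gamma> :: "'a \<Rightarrow> 'm \<Rightarrow> 'o"
  assumes wm: "while_monad etaM etaO eMM eMO eOM eOO leM botM leO botO"
    and em: "em_algebra etaO eMO eOO alg"
    and mp: "meet_preserving etaO eMO eOO alg"
    and cont: "\<forall>c s. omega_chain leO c \<longrightarrow> is_lub leO c s \<longrightarrow> alg s = (INF i. alg (c i))"
    and algbot: "alg botO = top"
    and gc: "\<forall>\<phi> a. \<alpha> \<phi> \<le> a \<longleftrightarrow> \<phi> \<le> \<gamma> a"
begin

abbreviation "WP \<equiv> wp etaO eMO alg"
abbreviation "SP \<equiv> sp etaO eMO alg"

lemma cpoM: "omega_cpo leM botM" using wm unfolding while_monad_def by blast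
lemma kMM: "kleisli_conds TYPE('m) leM botM leM botM eMM" using wm unfolding while_monad_def by blast
lemma kMO: "kleisli_conds TYPE('m) leM botM leO botO eMO" using wm unfolding while_monad_def by blast

lemma wp_Inf: "WP f (Inf X) \<rho> = (INF \<phi>\<in>X. WP f \<phi> \<rho>)"
proof -
  have "alg \<circ> Tmap eMO etaO (Inf X) = Inf ((\<lambda>phi. alg \<circ> Tmap eMO etaO phi) ` X)"
    using mp unfolding meet_preserving_def by blast
  hence "(alg \<circ> Tmap eMO etaO (Inf X)) (f \<rho>) = Inf ((\<lambda>phi. alg \<circ> Tmap eMO etaO phi) ` X) (f \<rho>)"
    by simp
  thus ?thesis unfolding wp_def by (simp add: Inf_apply image_comp comp_def)
qed

lemma wp_mono: "\<phi> \<le> \<psi> \<Longrightarrow> WP f \<phi> \<le> WP f \<psi>"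
proof (rule le_funI)
  fix \<rho> assume a: "\<phi> \<le> \<psi>"
  have "WP f (Inf {\<phi>,\<psi>}) \<rho> = inf (WP f \<phi> \<rho>) (WP f \<psi> \<rho>)" using wp_Inf[of f "{\<phi>,\<psi>}" \<rho>] by simp
  moreover have "Inf {\<phi>,\<psi>} = \<phi>" using a by (simp add: inf_absorb1)
  ultimately show "WP f \<phi> \<rho> \<le> WP f \<psi> \<rho>" by (metis inf.cobounded2)
qed

lemma sp_adj: "SP f psi \<le> phi \<longleftrightarrow> psi \<le> WP f phi"
proof -
  define g where "g = (\<lambda>psi. Inf {phi. psi \<le> WP f phi})"
  have G: "\<forall>psi phi. g psi \<le> phi \<longleftrightarrow> psi \<le> WP f phi"
  proof (intro allI iffI)
    fix psi phi assume "g psi \<le> phi"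
    moreover have "psi \<le> WP f (g psi)"
      unfolding g_def by (rule le_funI) (auto simp: wp_Inf le_INF_iff le_fun_def)
    ultimately show "psi \<le> WP f phi" using wp_mono order_trans by blast
  next
    fix psi phi assume "psi \<le> WP f phi" thus "g psi \<le> phi" unfolding g_def by (auto intro: Inf_lower)
  qed
  have "SP f = g" unfolding sp_def
  proof (rule the_equality)
    show "\<forall>psi phi. g psi \<le> phi \<longleftrightarrow> psi \<le> WP f phi" by (rule G)
  next
    fix h assume H: "\<forall>psi phi. h psi \<le> phi \<longleftrightarrow> psi \<le> WP f phi"
    show "h = g"
    proof
      fix psi show "h psi = g psi" using G H by (meson order_antisym order_refl)
    qed
  qed
  thus ?thesis using G by simp
qed

lemma sp_mono: "mono (SP f)"
  by (rule monoI) (metis sp_adj order_refl order_trans)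

lemma wp_kleisli: "WP (kleisli eMM g f) \<phi> = WP f (WP g \<phi>)"
proof
  fix \<rho>
  have as: "ext_assoc eMM eMO eMO" using wm unfolding while_monad_def by blast
  have "eMO (etaO \<circ> \<phi>) (eMM g (f \<rho>)) = eMO (\<lambda>y. eMO (etaO \<circ> \<phi>) (g y)) (f \<rho>)"
    using as unfolding ext_assoc_def by blast
  moreover have "alg (eMO (\<lambda>y. eMO (etaO \<circ> \<phi>) (g y)) (f \<rho>)) =
      alg (Tmap eMO etaO (alg \<circ> (\<lambda>y. eMO (etaO \<circ> \<phi>) (g y))) (f \<rho>))"
    using em unfolding em_algebra_def by blast
  ultimately show "WP (kleisli eMM g f) \<phi> \<rho> = WP f (WP g \<phi>) \<rho>"
    unfolding wp_def kleisli_def Tmap_def by (simp add: comp_def)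
qed

lemma wp_eta: "WP etaM \<phi> = \<phi>"
proof
  fix \<rho>
  have "unit_left etaM eMO" using wm unfolding while_monad_def by blast
  hence "eMO (etaO \<circ> \<phi>) (etaM \<rho>) = etaO (\<phi> \<rho>)" unfolding unit_left_def by simp
  thus "WP etaM \<phi> \<rho> = \<phi> \<rho>" using em unfolding wp_def Tmap_def em_algebra_def by simp
qed

lemma wp_bot: "WP (\<lambda>_. botM) \<phi> \<rho> = top"
proof -
  have "kleisli eMO g (\<lambda>_::'m. botM) = (\<lambda>_. botO)" for g
    using kMO unfolding kleisli_conds_def by blast
  hence "eMO g botM = botO" for g unfolding kleisli_def by (metis comp_apply)
  thus ?thesis unfolding wp_def Tmap_def using algbot by simp
qed

lemma wp_lub:
  assumes "omega_chain (fun_le leM) fs" "is_lub (fun_le leM) fs F"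
  shows "WP F \<phi> \<rho> = (INF i. WP (fs i) \<phi> \<rho>)"
proof -
  let ?h = "etaO \<circ> \<phi>"
  let ?g = "eMO ?h"
  have "is_lub (fun_le leO) (\<lambda>i. kleisli eMO ?h (fs i)) (kleisli eMO ?h F)"
    using kMO assms unfolding kleisli_conds_def by blast
  hence l: "is_lub leO (\<lambda>i. ?g (fs i \<rho>)) (?g (F \<rho>))"
    using fun_lub_pointwise[of leO] unfolding kleisli_def by fastforce
  have "fun_le leO (kleisli eMO ?h (fs i)) (kleisli eMO ?h (fs (Suc i)))" for i
    using kMO assms(1) unfolding kleisli_conds_def omega_chain_def by blast
  hence "omega_chain leO (\<lambda>i. ?g (fs i \<rho>))" unfolding omega_chain_def fun_le_def kleisli_def by simp
  with l cont have "alg (?g (F \<rho>)) = (INF i. alg (?g (fs i \<rho>)))" by blast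
  thus ?thesis unfolding wp_def Tmap_def by simp
qed

definition Phi :: "('m \<Rightarrow> bool) \<Rightarrow> ('m \<Rightarrow> 'tm) \<Rightarrow> ('m \<Rightarrow> 'tm) \<Rightarrow> 'm \<Rightarrow> 'tm" where
  "Phi c T = (\<lambda>f \<rho>. if c \<rho> then kleisli eMM f T \<rho> else etaM \<rho>)"

definition ch where "ch c T i = (Phi c T ^^ i) (\<lambda>_. botM)"

definition Flub where "Flub c T = (\<lambda>\<rho>. SOME s. is_lub leM (\<lambda>i. ch c T i \<rho>) s)"

lemma leM_refl: "leM x x" using cpoM unfolding omega_cpo_def by blast
lemma leM_bot: "leM botM x" using cpoM unfolding omega_cpo_def by blast
lemma leM_trans: "leM x y \<Longrightarrow> leM y z \<Longrightarrow> leM x z" using cpoM unfolding omega_cpo_def by blast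
lemma funle_antisym: "\<forall>x y. fun_le leM x y \<longrightarrow> fun_le leM y x \<longrightarrow> x = y"
  using cpoM unfolding omega_cpo_def fun_le_def by (metis ext)

lemma funle_trans: "fun_le leM f g \<Longrightarrow> fun_le leM g h \<Longrightarrow> fun_le leM f h"
  unfolding fun_le_def using leM_trans by blast

lemma Phi_mono: "fun_le leM f g \<Longrightarrow> fun_le leM (Phi c T f) (Phi c T g)"
proof -
  assume a: "fun_le leM f g"
  have "fun_le leM (kleisli eMM f T) (kleisli eMM g T)"
    using kMM a unfolding kleisli_conds_def by blast
  thus ?thesis unfolding Phi_def fun_le_def using leM_refl by auto
qed

lemma ch_chain: "omega_chain (fun_le leM) (ch c T)"
  unfolding omega_chain_def
proof
  fix i show "fun_le leM (ch c T i) (ch c T (Suc i))"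
  proof (induction i)
    case 0 thus ?case by (simp add: ch_def fun_le_def leM_bot)
  next
    case (Suc i) thus ?case using Phi_mono[OF Suc] by (simp add: ch_def)
  qed
qed

lemma Flub_lub: "is_lub (fun_le leM) (ch c T) (Flub c T)"
proof (rule pointwise_fun_lub)
  fix x
  have "omega_chain leM (\<lambda>i. ch c T i x)" using ch_chain unfolding omega_chain_def fun_le_def by blast
  hence "\<exists>s. is_lub leM (\<lambda>i. ch c T i x) s" using cpoM unfolding omega_cpo_def by blast
  thus "is_lub leM (\<lambda>i. ch c T i x) (Flub c T x)" unfolding Flub_def by (rule someI_ex)
qed

lemma Flub_fix: "Phi c T (Flub c T) = Flub c T"
proof -
  have "is_lub (fun_le leM) (\<lambda>i. kleisli eMM (ch c T i) T) (kleisli eMM (Flub c T) T)"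
    using kMM ch_chain Flub_lub unfolding kleisli_conds_def by blast
  hence k: "is_lub leM (\<lambda>i. kleisli eMM (ch c T i) T x) (kleisli eMM (Flub c T) T x)" for x
    by (rule fun_lub_pointwise)
  have "is_lub leM (\<lambda>i. Phi c T (ch c T i) x) (Phi c T (Flub c T) x)" for x
  proof (cases "c x")
    case True thus ?thesis using k by (simp add: Phi_def)
  next
    case False thus ?thesis by (simp add: Phi_def is_lub_def leM_refl)
  qed
  hence A: "is_lub (fun_le leM) (\<lambda>i. ch c T (Suc i)) (Phi c T (Flub c T))"
    by (intro pointwise_fun_lub) (simp add: ch_def)
  have B: "is_lub (fun_le leM) (\<lambda>i. ch c T (Suc i)) (Flub c T)"
    unfolding is_lub_def
  proof (intro conjI allI impI)
    fix i show "fun_le leM (ch c T (Suc i)) (Flub c T)" using Flub_lub unfolding is_lub_def by blast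
  next
    fix u assume u: "\<forall>i. fun_le leM (ch c T (Suc i)) u"
    have "fun_le leM (ch c T i) u" for i
      using u by (cases i) (auto simp: ch_def fun_le_def leM_bot)
    thus "fun_le leM (Flub c T) u" using Flub_lub unfolding is_lub_def by blast
  qed
  show ?thesis using lub_unique[OF funle_antisym A B] .
qed

lemma Flub_least: "Phi c T g = g \<Longrightarrow> fun_le leM (Flub c T) g"
proof -
  assume g: "Phi c T g = g"
  have "fun_le leM (ch c T i) g" for i
  proof (induction i)
    case 0 thus ?case by (simp add: ch_def fun_le_def leM_bot)
  next
    case (Suc i)
    have "fun_le leM (Phi c T (ch c T i)) (Phi c T g)" using Phi_mono[OF Suc] .
    thus ?case using g by (simp add: ch_def)
  qed
  thus ?thesis using Flub_lub unfolding is_lub_def by blast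
qed

lemma least_fix_eq: "least_fix (fun_le leM) (Phi c T) = Flub c T"
  unfolding least_fix_def
proof (rule the_equality)
  show "Phi c T (Flub c T) = Flub c T \<and> (\<forall>g. Phi c T g = g \<longrightarrow> fun_le leM (Flub c T) g)"
    using Flub_fix Flub_least by blast
next
  fix f assume "Phi c T f = f \<and> (\<forall>g. Phi c T g = g \<longrightarrow> fun_le leM f g)"
  thus "f = Flub c T" using Flub_fix Flub_least funle_antisym by blast
qed

lemma alpha_mono: "\<phi> \<le> \<psi> \<Longrightarrow> \<alpha> \<phi> \<le> \<alpha> \<psi>"
  using gc order_trans order_refl by metis
lemma gamma_mono: "a \<le> b \<Longrightarrow> \<gamma> a \<le> \<gamma> b"
  using gc order_trans order_refl by metis

lemma gamma_grd: "g \<rho> = top \<Longrightarrow> \<gamma> a \<rho> \<le> \<gamma> (inf a (\<alpha> g)) \<rho>"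
proof -
  assume g: "g \<rho> = top"
  have "\<alpha> (inf (\<gamma> a) g) \<le> a" using gc by (meson inf.cobounded1)
  moreover have "\<alpha> (inf (\<gamma> a) g) \<le> \<alpha> g" by (rule alpha_mono) simp
  ultimately have "\<alpha> (inf (\<gamma> a) g) \<le> inf a (\<alpha> g)" by simp
  hence "inf (\<gamma> a) g \<le> \<gamma> (inf a (\<alpha> g))" using gc by blast
  hence "inf (\<gamma> a \<rho>) (g \<rho>) \<le> \<gamma> (inf a (\<alpha> g)) \<rho>" by (auto simp: le_fun_def)
  thus ?thesis using g by simp
qed


lemma wp_Phi: "WP (Phi c T f) \<phi> \<rho> = (if c \<rho> then WP T (WP f \<phi>) \<rho> else \<phi> \<rho>)"
proof -
  have "WP (Phi c T f) \<phi> \<rho> = (if c \<rho> then WP (kleisli eMM f T) \<phi> \<rho> else WP etaM \<phi> \<rho>)"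
    by (simp add: Phi_def wp_def)
  thus ?thesis by (simp add: wp_kleisli wp_eta)
qed

lemma ch_Suc: "ch c T (Suc i) = Phi c T (ch c T i)" by (simp add: ch_def)

lemma gamma_alpha: "\<phi> \<le> \<gamma> (\<alpha> \<phi>)" using gc by blast

lemma sound:
  fixes asgn :: "'x \<Rightarrow> 'e \<Rightarrow> 'm \<Rightarrow> 'tm" and cond :: "'b \<Rightarrow> 'm \<Rightarrow> bool"
  shows "\<forall>a. \<gamma> a \<le> WP (semT etaM eMM leM asgn cond P) (\<gamma> (semA etaO eMO alg \<alpha> \<gamma> asgn cond P a))"
proof (induction P)
  case Skip thus ?case by (simp add: wp_eta)
next
  case (Seq P Q)
  show ?case
  proof
    fix a
    let ?a = "semA etaO eMO alg \<alpha> \<gamma> asgn cond P a"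
    have "\<gamma> a \<le> WP (semT etaM eMM leM asgn cond P) (\<gamma> ?a)" using Seq by blast
    also have "\<dots> \<le> WP (semT etaM eMM leM asgn cond P) (WP (semT etaM eMM leM asgn cond Q)
        (\<gamma> (semA etaO eMO alg \<alpha> \<gamma> asgn cond Q ?a)))"
      using Seq wp_mono by blast
    finally show "\<gamma> a \<le> WP (semT etaM eMM leM asgn cond (Seq P Q)) (\<gamma> (semA etaO eMO alg \<alpha> \<gamma> asgn cond (Seq P Q) a))"
      by (simp add: wp_kleisli)
  qed
next
  case (Assign x e)
  show ?case
  proof (simp, intro allI)
    fix a show "\<gamma> a \<le> WP (asgn x e) (\<gamma> (\<alpha> (SP (asgn x e) (\<gamma> a))))"
      using sp_adj[of "asgn x e" "\<gamma> a"] gamma_alpha by blast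
  qed
next
  case (If b P Q)
  show ?case
  proof (intro allI le_funI)
    fix a \<rho>
    let ?AP = "semA etaO eMO alg \<alpha> \<gamma> asgn cond P"
    let ?AQ = "semA etaO eMO alg \<alpha> \<gamma> asgn cond Q"
    let ?TP = "semT etaM eMM leM asgn cond P"
    let ?TQ = "semT etaM eMM leM asgn cond Q"
    let ?r = "sup (?AP (inf a (\<alpha> (grd cond b True)))) (?AQ (inf a (\<alpha> (grd cond b False))))"
    show "\<gamma> a \<rho> \<le> WP (semT etaM eMM leM asgn cond (If b P Q)) (\<gamma> (semA etaO eMO alg \<alpha> \<gamma> asgn cond (If b P Q) a)) \<rho>"
    proof (cases "cond b \<rho>")
      case True
      have "\<gamma> a \<rho> \<le> \<gamma> (inf a (\<alpha> (grd cond b True))) \<rho>"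
        by (rule gamma_grd) (simp add: grd_def True)
      also have "\<dots> \<le> WP ?TP (\<gamma> (?AP (inf a (\<alpha> (grd cond b True))))) \<rho>"
        using If.IH(1) by (auto simp: le_fun_def)
      also have "\<dots> \<le> WP ?TP (\<gamma> ?r) \<rho>"
        using wp_mono[OF gamma_mono[OF sup.cobounded1]] by (auto simp: le_fun_def)
      finally show ?thesis using True by (simp add: wp_def)
    next
      case False
      have "\<gamma> a \<rho> \<le> \<gamma> (inf a (\<alpha> (grd cond b False))) \<rho>"
        by (rule gamma_grd) (simp add: grd_def False)
      also have "\<dots> \<le> WP ?TQ (\<gamma> (?AQ (inf a (\<alpha> (grd cond b False))))) \<rho>"
        using If.IH(2) by (auto simp: le_fun_def)
      also have "\<dots> \<le> WP ?TQ (\<gamma> ?r) \<rho>"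
        using wp_mono[OF gamma_mono[OF sup.cobounded2]] by (auto simp: le_fun_def)
      finally show ?thesis using False by (simp add: wp_def)
    qed
  qed
next
  case (While b P)
  let ?AP = "semA etaO eMO alg \<alpha> \<gamma> asgn cond P"
  let ?TP = "semT etaM eMM leM asgn cond P"
  let ?W = "semA etaO eMO alg \<alpha> \<gamma> asgn cond (While b P)"
  let ?Th = "(\<lambda>f \<phi>. sup (f (?AP (inf \<phi> (\<alpha> (grd cond b True))))) (inf \<phi> (\<alpha> (grd cond b False))))"
  have Wdef: "?W = lfp_mono ?Th" by simp
  have "?Th ?W \<le> ?W" unfolding Wdef
    by (rule lfp_mono_pre) (auto simp: le_fun_def intro: sup_mono le_supI1)
  hence W1: "?W (?AP (inf a (\<alpha> (grd cond b True)))) \<le> ?W a"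
    and W2: "inf a (\<alpha> (grd cond b False)) \<le> ?W a" for a
    by (auto simp: le_fun_def)
  have T: "semT etaM eMM leM asgn cond (While b P) = Flub (cond b) ?TP"
    using least_fix_eq[of "cond b" ?TP] by (simp add: Phi_def)
  have C: "\<forall>a. \<gamma> a \<le> WP (ch (cond b) ?TP i) (\<gamma> (?W a))" for i
  proof (induction i)
    case 0 show ?case by (simp add: ch_def le_fun_def wp_bot)
  next
    case (Suc i)
    show ?case
    proof (intro allI le_funI)
      fix a \<rho>
      show "\<gamma> a \<rho> \<le> WP (ch (cond b) ?TP (Suc i)) (\<gamma> (?W a)) \<rho>"
      proof (cases "cond b \<rho>")
        case True
        let ?a = "?AP (inf a (\<alpha> (grd cond b True)))"
        have "\<gamma> a \<rho> \<le> \<gamma> (inf a (\<alpha> (grd cond b True))) \<rho>"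
          by (rule gamma_grd) (simp add: grd_def True)
        also have "\<dots> \<le> WP ?TP (\<gamma> ?a) \<rho>"
          using While.IH by (auto simp: le_fun_def)
        also have "\<dots> \<le> WP ?TP (WP (ch (cond b) ?TP i) (\<gamma> (?W ?a))) \<rho>"
          using wp_mono Suc by (auto simp: le_fun_def)
        also have "\<dots> \<le> WP ?TP (WP (ch (cond b) ?TP i) (\<gamma> (?W a))) \<rho>"
          using wp_mono[OF wp_mono[OF gamma_mono[OF W1]]] by (auto simp: le_fun_def)
        finally show ?thesis using True by (simp only: ch_Suc wp_Phi if_True)
      next
        case False
        have "\<gamma> a \<rho> \<le> \<gamma> (inf a (\<alpha> (grd cond b False))) \<rho>"
          by (rule gamma_grd) (simp add: grd_def False)
        also have "\<dots> \<le> \<gamma> (?W a) \<rho>" using gamma_mono[OF W2] by (auto simp: le_fun_def)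
        finally show ?thesis using False by (simp only: ch_Suc wp_Phi if_False)
      qed
    qed
  qed
  show ?case
  proof (intro allI le_funI)
    fix a \<rho>
    have "\<gamma> a \<rho> \<le> (INF i. WP (ch (cond b) ?TP i) (\<gamma> (?W a)) \<rho>)"
      using C by (auto simp: le_fun_def intro: INF_greatest)
    also have "\<dots> = WP (Flub (cond b) ?TP) (\<gamma> (?W a)) \<rho>"
      using wp_lub[OF ch_chain Flub_lub] by simp
    finally show "\<gamma> a \<rho> \<le> WP (semT etaM eMM leM asgn cond (While b P)) (\<gamma> (?W a)) \<rho>"
      using T by simp
  qed
qed


lemma semA_mono:
  fixes asgn :: "'x \<Rightarrow> 'e \<Rightarrow> 'm \<Rightarrow> 'tm" and cond :: "'b \<Rightarrow> 'm \<Rightarrow> bool"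
  shows "mono (semA etaO eMO alg \<alpha> \<gamma> asgn cond P)"
proof (induction P)
  case Skip thus ?case by (simp add: mono_def)
next
  case (Seq P Q) thus ?case by (simp add: mono_def)
next
  case (Assign x e) thus ?case
    using sp_mono alpha_mono gamma_mono by (simp add: mono_def)
next
  case (If b P Q) thus ?case
  proof (intro monoI)
    fix x y :: 'a assume xy: "x \<le> y"
    have "semA etaO eMO alg \<alpha> \<gamma> asgn cond P (inf x (\<alpha> (grd cond b True))) \<le>
          semA etaO eMO alg \<alpha> \<gamma> asgn cond P (inf y (\<alpha> (grd cond b True)))"
      using If.IH(1) xy by (meson inf_mono monoD order_refl)
    moreover have "semA etaO eMO alg \<alpha> \<gamma> asgn cond Q (inf x (\<alpha> (grd cond b False))) \<le>
          semA etaO eMO alg \<alpha> \<gamma> asgn cond Q (inf y (\<alpha> (grd cond b False)))"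
      using If.IH(2) xy by (meson inf_mono monoD order_refl)
    ultimately show "semA etaO eMO alg \<alpha> \<gamma> asgn cond (If b P Q) x \<le> semA etaO eMO alg \<alpha> \<gamma> asgn cond (If b P Q) y"
      by (auto intro: le_supI1 le_supI2)
  qed
next
  case (While b P) thus ?case by (simp add: mono_lfp_mono)
qed

lemma soundC:
  fixes asgn :: "'x \<Rightarrow> 'e \<Rightarrow> 'm \<Rightarrow> 'tm" and cond :: "'b \<Rightarrow> 'm \<Rightarrow> bool"
  shows "\<alpha> \<circ> semC etaM eMM leM asgn cond etaO eMO alg P \<circ> \<gamma> \<le> semA etaO eMO alg \<alpha> \<gamma> asgn cond P"
proof (rule le_funI)
  fix a
  have "\<gamma> a \<le> WP (semT etaM eMM leM asgn cond P) (\<gamma> (semA etaO eMO alg \<alpha> \<gamma> asgn cond P a))"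
    using sound by blast
  thus "(\<alpha> \<circ> semC etaM eMM leM asgn cond etaO eMO alg P \<circ> \<gamma>) a \<le> semA etaO eMO alg \<alpha> \<gamma> asgn cond P a"
    using sp_adj gc by (simp add: semC_def)
qed

end

lemma semA_prog_eq:
  "prog_eq P Q \<Longrightarrow> semA etaO eMO alg \<alpha> \<gamma> asgn cond P = semA etaO eMO alg \<alpha> \<gamma> asgn cond Q"
  by (induction rule: prog_eq.induct) (auto simp: comp_assoc)


theorem mainTheorem6:
  fixes etaM :: "('x \<Rightarrow> 'v) \<Rightarrow> 'tm" and etaO :: "'o::complete_lattice \<Rightarrow> 'to"
    and eMM :: "(('x \<Rightarrow> 'v) \<Rightarrow> 'tm) \<Rightarrow> 'tm \<Rightarrow> 'tm"
    and eMO :: "(('x \<Rightarrow> 'v) \<Rightarrow> 'to) \<Rightarrow> 'tm \<Rightarrow> 'to"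
    and eOM :: "('o \<Rightarrow> 'tm) \<Rightarrow> 'to \<Rightarrow> 'tm"
    and eOO :: "('o \<Rightarrow> 'to) \<Rightarrow> 'to \<Rightarrow> 'to"
    and leM :: "'tm \<Rightarrow> 'tm \<Rightarrow> bool" and botM :: 'tm
    and leO :: "'to \<Rightarrow> 'to \<Rightarrow> bool" and botO :: 'to
    and alg :: "'to \<Rightarrow> 'o"
    and \<alpha> :: "(('x \<Rightarrow> 'v) \<Rightarrow> 'o) \<Rightarrow> 'a::complete_lattice"
    and \<gamma> :: "'a \<Rightarrow> ('x \<Rightarrow> 'v) \<Rightarrow> 'o"
    and asgn :: "'x \<Rightarrow> 'e \<Rightarrow> ('x \<Rightarrow> 'v) \<Rightarrow> 'tm"
    and cond :: "'b \<Rightarrow> ('x \<Rightarrow> 'v) \<Rightarrow> bool"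
  assumes "finite (UNIV :: 'x set)"
    and "while_monad etaM etaO eMM eMO eOM eOO leM botM leO botO"
    and "em_algebra etaO eMO eOO alg"
    and "meet_preserving etaO eMO eOO alg"
    and "\<forall>c s. omega_chain leO c \<longrightarrow> is_lub leO c s \<longrightarrow> alg s = (INF i. alg (c i))"
    and "alg botO = top"
    and "\<forall>\<phi> a. \<alpha> \<phi> \<le> a \<longleftrightarrow> \<phi> \<le> \<gamma> a"
  shows "(\<forall>P :: ('x, 'e, 'b) prog. mono (semA etaO eMO alg \<alpha> \<gamma> asgn cond P)) \<and>
         semA etaO eMO alg \<alpha> \<gamma> asgn cond Skip = id \<and>
         (\<forall>P Q :: ('x, 'e, 'b) prog. semA etaO eMO alg \<alpha> \<gamma> asgn cond (Seq P Q) =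
             semA etaO eMO alg \<alpha> \<gamma> asgn cond Q \<circ> semA etaO eMO alg \<alpha> \<gamma> asgn cond P) \<and>
         (\<forall>P Q :: ('x, 'e, 'b) prog. prog_eq P Q \<longrightarrow>
             semA etaO eMO alg \<alpha> \<gamma> asgn cond P = semA etaO eMO alg \<alpha> \<gamma> asgn cond Q) \<and>
         (\<forall>P :: ('x, 'e, 'b) prog.
             \<alpha> \<circ> semC etaM eMM leM asgn cond etaO eMO alg P \<circ> \<gamma> \<le> semA etaO eMO alg \<alpha> \<gamma> asgn cond P)"
  proof -
  interpret L etaM etaO eMM eMO eOM eOO leM botM leO botO alg \<alpha> \<gamma>
    using assms(2-7) by unfold_locales
  show ?thesis
    using semA_mono soundC semA_prog_eq by (intro conjI allI impI; simp add: semA_mono soundC semA_prog_eq)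
qed

end
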